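(* Let $w$ be a Robinsonian graphon satisfying Assumptions (A1)–(A4). Then the Fiedler value $\lambda_2$ of $\mathbb{L}$ does not belong to the range $\mathrm{rg}(d)=\{d(x):x\in[0,1]\}$ of the degree function.
   Context: A graphon is a measurable symmetric function $w:[0,1]^2\to[0,1]$. It is Robinsonian if for all $x,y,z\in[0,1]$: $y<z<x\Rightarrow w(x,y)\le w(x,z)$ and $x<y<z\Rightarrow w(x,y)\ge w(x,z)$. The degree function is $d(x)=\int_0^1 w(x,y)\,dy$. The graphon-Laplacian is $(\mathbb{L}f)(x)=\int_0^1 w(x,y)(f(x)-f(y))\,dy$ on $L^2([0,1])$; its isolated eigenvalues of finite multiplicity are listed increasingly as $0=\lambda_1<\lambda_2<\cdots$, and $\lambda_2$ is the Fiedler value. Assumptions: (A1) there is $K>0$ with $|w(x,y)-w(x',y')|\le K(|x-x'|+|y-y'|)$; (A2) for every $x$, $\partial w(x,y)/\partial x$ exists and is non-zero for almost every $y$; (A3) $d'(x)$ exists for all $x\in[0,1]$ and $\{x: d'(x)=0\}$ is countable; (A4) with $\mathcal{H}=\{f\in L^2([0,1]):\int_0^1 f=0,\ \int_0^1 f^2=1\}$, $\inf_{f\in\mathcal{H}}\langle \mathbb{L}f,f\rangle<\inf_{x\in[0,1]}d(x)$. *)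

theory Defs
  imports "HOL-Analysis.Analysis"
begin

abbreviation I01 :: "real measure" where
  "I01 \<equiv> lebesgue_on {0..1}"

definition graphon :: "(real \<Rightarrow> real \<Rightarrow> real) \<Rightarrow> bool" where
  "graphon w \<longleftrightarrow>
     (\<lambda>(x,y). w x y) \<in> borel_measurable (lebesgue_on ({0..1} \<times> {0..1}))
   \<and> (\<forall>x\<in>{0..1}. \<forall>y\<in>{0..1}. w x y = w y x \<and> 0 \<le> w x y \<and> w x y \<le> 1)"

definition robinsonian :: "(real \<Rightarrow> real \<Rightarrow> real) \<Rightarrow> bool" where
  "robinsonian w \<longleftrightarrow>
     (\<forall>x\<in>{0..1}. \<forall>y\<in>{0..1}. \<forall>z\<in>{0..1}.
        (y < z \<and> z < x \<longrightarrow> w x y \<le> w x z) \<and> (x < y \<and> y < z \<longrightarrow> w x y \<ge> w x z))"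

definition deg :: "(real \<Rightarrow> real \<Rightarrow> real) \<Rightarrow> real \<Rightarrow> real" where
  "deg w x = (LINT y|I01. w x y)"

definition lap :: "(real \<Rightarrow> real \<Rightarrow> real) \<Rightarrow> (real \<Rightarrow> real) \<Rightarrow> real \<Rightarrow> real" where
  "lap w f x = (LINT y|I01. w x y * (f x - f y))"

text \<open>Membership in L^2([0,1]) (elements are represented by functions; equality is a.e.).\<close>
definition L2 :: "(real \<Rightarrow> real) \<Rightarrow> bool" where
  "L2 f \<longleftrightarrow> f \<in> borel_measurable I01 \<and> integrable I01 (\<lambda>x. (f x)\<^sup>2)"

definition eigvec :: "(real \<Rightarrow> real \<Rightarrow> real) \<Rightarrow> real \<Rightarrow> (real \<Rightarrow> real) \<Rightarrow> bool" where
  "eigvec w lam f \<longleftrightarrow> L2 f \<and> (AE x in I01. lap w f x = lam * f x)"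

definition is_eigenvalue :: "(real \<Rightarrow> real \<Rightarrow> real) \<Rightarrow> real \<Rightarrow> bool" where
  "is_eigenvalue w lam \<longleftrightarrow> (\<exists>f. eigvec w lam f \<and> \<not> (AE x in I01. f x = 0))"

text \<open>L is bounded and self-adjoint, so its spectrum is real and
  bijectivity is equivalent to bounded invertibility.\<close>
definition spec :: "(real \<Rightarrow> real \<Rightarrow> real) \<Rightarrow> real set" where
  "spec w = {lam. \<not> ((\<forall>f. L2 f \<and> (AE x in I01. lap w f x - lam * f x = 0) \<longrightarrow> (AE x in I01. f x = 0))
                    \<and> (\<forall>g. L2 g \<longrightarrow> (\<exists>f. L2 f \<and> (AE x in I01. lap w f x - lam * f x = g x))))}"

definition finite_multiplicity :: "(real \<Rightarrow> real \<Rightarrow> real) \<Rightarrow> real \<Rightarrow> bool" where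
  "finite_multiplicity w lam \<longleftrightarrow>
     (\<exists>B. finite B \<and> (\<forall>f\<in>B. eigvec w lam f) \<and>
          (\<forall>g. eigvec w lam g \<longrightarrow> (\<exists>c. AE x in I01. g x = (\<Sum>f\<in>B. c f * f x))))"

definition disc_eigenvalues :: "(real \<Rightarrow> real \<Rightarrow> real) \<Rightarrow> real set" where
  "disc_eigenvalues w = {lam. is_eigenvalue w lam
        \<and> (\<exists>e>0. \<forall>\<mu>\<in>spec w. \<bar>\<mu> - lam\<bar> < e \<longrightarrow> \<mu> = lam)
        \<and> finite_multiplicity w lam}"

text \<open>The Fiedler value lambda_2: the second element of the increasing enumeration
  lambda_1 < lambda_2 < ... of the isolated eigenvalues of finite multiplicity.\<close>
definition fiedler_value :: "(real \<Rightarrow> real \<Rightarrow> real) \<Rightarrow> real \<Rightarrow> bool" where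
  "fiedler_value w lam \<longleftrightarrow> lam \<in> disc_eigenvalues w \<and> (\<exists>!\<mu>. \<mu> \<in> disc_eigenvalues w \<and> \<mu> < lam)"

definition assm_A1 :: "(real \<Rightarrow> real \<Rightarrow> real) \<Rightarrow> bool" where
  "assm_A1 w \<longleftrightarrow> (\<exists>K>0. \<forall>x\<in>{0..1}. \<forall>y\<in>{0..1}. \<forall>x'\<in>{0..1}. \<forall>y'\<in>{0..1}.
      \<bar>w x y - w x' y'\<bar> \<le> K * (\<bar>x - x'\<bar> + \<bar>y - y'\<bar>))"

definition assm_A2 :: "(real \<Rightarrow> real \<Rightarrow> real) \<Rightarrow> bool" where
  "assm_A2 w \<longleftrightarrow> (\<forall>x\<in>{0..1}. AE y in I01.
      \<exists>D. ((\<lambda>t. w t y) has_real_derivative D) (at x within {0..1}) \<and> D \<noteq> 0)"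

definition assm_A3 :: "(real \<Rightarrow> real \<Rightarrow> real) \<Rightarrow> bool" where
  "assm_A3 w \<longleftrightarrow> (\<forall>x\<in>{0..1}. deg w differentiable (at x within {0..1}))
      \<and> countable {x\<in>{0..1}. (deg w has_real_derivative 0) (at x within {0..1})}"

definition assm_A4 :: "(real \<Rightarrow> real \<Rightarrow> real) \<Rightarrow> bool" where
  "assm_A4 w \<longleftrightarrow>
     Inf {(LINT x|I01. lap w f x * f x) | f. L2 f \<and> (LINT x|I01. f x) = 0 \<and> (LINT x|I01. (f x)\<^sup>2) = 1}
       < Inf (deg w ` {0..1})"

end

theory Submission
  imports Defs
begin

definition lipw :: "(real \<Rightarrow> real \<Rightarrow> real) \<Rightarrow> real \<Rightarrow> bool" where
 "lipw w K \<longleftrightarrow> (\<forall>x\<in>{0..1}. \<forall>y\<in>{0..1}. \<forall>x'\<in>{0..1}. \<forall>y'\<in>{0..1}.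
      \<bar>w x y - w x' y'\<bar> \<le> K * (\<bar>x - x'\<bar> + \<bar>y - y'\<bar>))"

lemma lipwD: "lipw w K \<Longrightarrow> x \<in> {0..1} \<Longrightarrow> y \<in> {0..1} \<Longrightarrow> x' \<in> {0..1} \<Longrightarrow> y' \<in> {0..1} \<Longrightarrow>
   \<bar>w x y - w x' y'\<bar> \<le> K * (\<bar>x - x'\<bar> + \<bar>y - y'\<bar>)"
  unfolding lipw_def by blast

lemma I01_fin: "finite_measure I01"
  by (rule finite_measure_lebesgue_on) simp

lemma I01_const: "integrable I01 (\<lambda>_. c::real)"
  using finite_measure.integrable_const[OF I01_fin] by blast

lemma meas_w:
  assumes "lipw w K" "K > 0" "x \<in> {0..1}"
  shows "w x \<in> borel_measurable I01"
proof -
  have "continuous_on {0..1} (w x)"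
    unfolding continuous_on_iff
  proof (intro ballI allI impI)
    fix y e assume y: "y \<in> {0..(1::real)}" and e: "(0::real) < e"
    show "\<exists>d>0. \<forall>y'\<in>{0..1}. dist y' y < d \<longrightarrow> dist (w x y') (w x y) < e"
    proof (intro exI[of _ "e / K"] conjI ballI impI)
      show "e / K > 0" using e assms(2) by simp
      fix y' assume y': "y' \<in> {0..(1::real)}" "dist y' y < e / K"
      have "\<bar>w x y' - w x y\<bar> \<le> K * (\<bar>x - x\<bar> + \<bar>y' - y\<bar>)"
        using assms(1,3) y y' unfolding lipw_def by blast
      also have "\<dots> < K * (e / K)" using y' assms(2) by (simp add: dist_real_def pos_less_divide_eq mult.commute)
      also have "\<dots> = e" using assms(2) by simp
      finally show "dist (w x y') (w x y) < e" by (simp add: dist_real_def)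
    qed
  qed
  then show ?thesis by (rule continuous_imp_measurable_on_sets_lebesgue) simp
qed

lemma abs_le_sq: "\<bar>a::real\<bar> \<le> 1 + a\<^sup>2"
proof -
  have "0 \<le> (\<bar>a\<bar> - 1)\<^sup>2" by simp
  also have "\<dots> = a\<^sup>2 + 1 - 2 * \<bar>a\<bar>" by (simp add: power2_diff power2_abs)
  finally show ?thesis using abs_ge_zero[of a] by linarith
qed

lemma L2_int:
  assumes "L2 f" shows "integrable I01 f"
proof (rule Bochner_Integration.integrable_bound[where M=I01 and f="\<lambda>x. 1 + (f x)\<^sup>2" and g=f])
  show "integrable I01 (\<lambda>x. 1 + (f x)\<^sup>2)"
    using assms I01_const unfolding L2_def by (intro Bochner_Integration.integrable_add) auto
  show "f \<in> borel_measurable I01" using assms unfolding L2_def by blast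
  show "AE x in I01. norm (f x) \<le> norm (1 + (f x)\<^sup>2)"
  proof (rule AE_I2)
    fix x
    have "\<bar>f x\<bar> \<le> 1 + (f x)\<^sup>2" by (rule abs_le_sq)
    then show "norm (f x) \<le> norm (1 + (f x)\<^sup>2)" by simp
  qed
qed

lemma int_wf:
  assumes "graphon w" "lipw w K" "K > 0" "x \<in> {0..1}" "integrable I01 f"
  shows "integrable I01 (\<lambda>y. w x y * f y)"
proof (rule Bochner_Integration.integrable_bound[OF assms(5)])
  show "(\<lambda>y. w x y * f y) \<in> borel_measurable I01"
    using meas_w[OF assms(2,3,4)] integrable_iff_bounded assms(5) by (intro borel_measurable_times) auto
  show "AE y in I01. norm (w x y * f y) \<le> norm (f y)"
  proof (rule AE_I2)
    fix y assume "y \<in> space I01"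
    then have "0 \<le> w x y" "w x y \<le> 1" using assms(1,4) unfolding graphon_def by auto
    then show "norm (w x y * f y) \<le> norm (f y)"
      by (simp add: abs_mult mult_left_le_one_le)
  qed
qed

lemma int_w:
  assumes "graphon w" "lipw w K" "K > 0" "x \<in> {0..1}"
  shows "integrable I01 (\<lambda>y. w x y)"
  using int_wf[OF assms I01_const[of 1]] by simp

definition Wop :: "(real \<Rightarrow> real \<Rightarrow> real) \<Rightarrow> (real \<Rightarrow> real) \<Rightarrow> real \<Rightarrow> real" where
  "Wop w f x = (LINT y|I01. w x y * f y)"

lemma lap_eq:
  assumes "graphon w" "lipw w K" "K > 0" "x \<in> {0..1}" "integrable I01 f"
  shows "lap w f x = deg w x * f x - Wop w f x"
proof -
  have "lap w f x = (LINT y|I01. w x y * f x - w x y * f y)"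
    unfolding lap_def by (simp add: algebra_simps)
  also have "\<dots> = (LINT y|I01. w x y * f x) - (LINT y|I01. w x y * f y)"
    using int_w[OF assms(1-4)] int_wf[OF assms] by (intro Bochner_Integration.integral_diff) auto
  also have "\<dots> = deg w x * f x - Wop w f x"
    unfolding deg_def Wop_def by simp
  finally show ?thesis .
qed

lemma Wop_lip:
  assumes "graphon w" "lipw w K" "K > 0" "x \<in> {0..1}" "x' \<in> {0..1}" "integrable I01 f"
  shows "\<bar>Wop w f x - Wop w f x'\<bar> \<le> K * \<bar>x - x'\<bar> * (LINT y|I01. \<bar>f y\<bar>)"
proof -
  have "Wop w f x - Wop w f x' = (LINT y|I01. (w x y - w x' y) * f y)"
    unfolding Wop_def using int_wf[OF assms(1-4,6)] int_wf[OF assms(1-3,5,6)]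
    by (subst Bochner_Integration.integral_diff[symmetric]) (auto simp: algebra_simps)
  also have "\<bar>\<dots>\<bar> \<le> (LINT y|I01. \<bar>(w x y - w x' y) * f y\<bar>)"
    by (rule integral_abs_bound)
  also have "\<dots> \<le> (LINT y|I01. K * \<bar>x - x'\<bar> * \<bar>f y\<bar>)"
  proof (rule Bochner_Integration.integral_mono)
    show "integrable I01 (\<lambda>y. K * \<bar>x - x'\<bar> * \<bar>f y\<bar>)"
      using assms(6) by (intro integrable_mult_right integrable_abs)
    show "integrable I01 (\<lambda>y. \<bar>(w x y - w x' y) * f y\<bar>)"
      using int_wf[OF assms(1-4,6)] int_wf[OF assms(1-3,5,6)]
      by (intro integrable_abs) (auto simp: left_diff_distrib)
    fix y assume "y \<in> space I01"
    then have "\<bar>w x y - w x' y\<bar> \<le> K * (\<bar>x - x'\<bar> + \<bar>y - y\<bar>)"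
      using assms(4,5) by (intro lipwD[OF assms(2)]) auto
    then show "\<bar>(w x y - w x' y) * f y\<bar> \<le> K * \<bar>x - x'\<bar> * \<bar>f y\<bar>"
      by (simp add: abs_mult mult_right_mono)
  qed
  also have "\<dots> = K * \<bar>x - x'\<bar> * (LINT y|I01. \<bar>f y\<bar>)" by simp
  finally show ?thesis .
qed

lemma deg_lip:
  assumes "graphon w" "lipw w K" "K > 0" "x \<in> {0..1}" "x' \<in> {0..1}"
  shows "\<bar>deg w x - deg w x'\<bar> \<le> K * \<bar>x - x'\<bar>"
proof -
  have "deg w x = Wop w (\<lambda>_. 1) x" "deg w x' = Wop w (\<lambda>_. 1) x'"
    unfolding deg_def Wop_def by simp_all
  moreover have "(LINT y|I01. \<bar>1::real\<bar>) = 1"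
    by (simp add: measure_restrict_space)
  ultimately show ?thesis using Wop_lip[OF assms I01_const[of 1]] by simp
qed

lemma key_ineq:
  fixes K A eta :: real
  assumes "K > 0" "A \<ge> 0" "eta \<ge> 0" "eta \<le> 1 / (2 * K * A + 1)"
  shows "K * A * eta \<le> 1 / 2"
proof -
  have pos: "2 * K * A + 1 > 0" using assms by (simp add: mult_nonneg_nonneg add_nonneg_pos)
  have "K * A * eta \<le> K * A * (1 / (2 * K * A + 1))"
    using assms by (intro mult_left_mono) auto
  also have "\<dots> = K * A / (2 * K * A + 1)" by simp
  also have "\<dots> \<le> 1 / 2" using pos by (simp add: divide_simps)
  finally show ?thesis .
qed

lemma spec_mem:
  assumes gr: "graphon w" and lip: "lipw w K" and K: "K > 0" and x0: "x0 \<in> {0<..<1}"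
  shows "deg w x0 \<in> spec w"
proof -
  define g :: "real \<Rightarrow> real" where "g x = (if x0 < x then 1 else -1)" for x
  have idm[measurable]: "(\<lambda>x::real. x) \<in> borel_measurable I01"
    by (rule continuous_imp_measurable_on_sets_lebesgue) (auto intro: continuous_intros)
  have gm: "g \<in> borel_measurable I01" unfolding g_def by measurable
  have "(\<lambda>x. (g x)\<^sup>2) = (\<lambda>x. 1)" by (rule ext) (simp add: g_def)
  then have Lg: "L2 g" unfolding L2_def using gm I01_const[of 1] by simp
  have nosol: False if Lf: "L2 f" and eq: "AE x in I01. lap w f x - deg w x0 * f x = g x" for f
  proof -
    have fi: "integrable I01 f" using L2_int[OF Lf] .
    define A where "A = (LINT y|I01. \<bar>f y\<bar>)"
    have A0: "A \<ge> 0" unfolding A_def by simp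
    define C where "C = Wop w f x0"
    define Q where "Q = (LINT x|I01. (f x)\<^sup>2)"
    have x01: "x0 \<in> {0..1}" using x0 by auto
    have eq2: "AE x in I01. (deg w x - deg w x0) * f x = g x + Wop w f x"
    proof (rule AE_mp[OF eq], rule AE_I2, intro impI)
      fix x assume x: "x \<in> space I01" and e: "lap w f x - deg w x0 * f x = g x"
      have "x \<in> {0..1}" using x by simp
      then show "(deg w x - deg w x0) * f x = g x + Wop w f x"
        using e lap_eq[OF gr lip K _ fi] by (simp add: algebra_simps)
    qed
    define eta where "eta = min (min x0 (1 - x0)) (min (1 / (2 * K * A + 1)) (1 / (4 * K\<^sup>2 * (Q + 1))))"
    have Q0: "Q \<ge> 0" unfolding Q_def by simp
    have eta0: "eta > 0" unfolding eta_def using x0 K A0 Q0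
      by (auto simp: add_nonneg_pos mult_nonneg_nonneg)
    have etaKA: "K * A * eta \<le> 1 / 2"
      using key_ineq[OF K A0, of eta] eta0 unfolding eta_def by auto
    obtain a b where ab: "b - a = eta" "{a<..<b} \<subseteq> {0..1}"
      and near: "\<And>x. x \<in> {a<..<b} \<Longrightarrow> \<bar>x - x0\<bar> \<le> eta"
      and big: "\<And>x. x \<in> {a<..<b} \<Longrightarrow> \<bar>g x + Wop w f x\<bar> \<ge> 1 / 2"
    proof (cases "C \<ge> 0")
      case True
      show ?thesis
      proof (rule that[of "x0 + eta" x0])
        show "x0 + eta - x0 = eta" by simp
        show "{x0<..<x0 + eta} \<subseteq> {0..1}" using x0 eta0 unfolding eta_def by auto
        fix x assume x: "x \<in> {x0<..<x0 + eta}"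
        then show "\<bar>x - x0\<bar> \<le> eta" by auto
        have x1: "x \<in> {0..1}" using x x0 eta0 unfolding eta_def by auto
        have "\<bar>Wop w f x - Wop w f x0\<bar> \<le> K * \<bar>x - x0\<bar> * A"
          unfolding A_def by (rule Wop_lip[OF gr lip K x1 x01 fi])
        also have "\<dots> \<le> K * eta * A" using x K A0 by (intro mult_right_mono mult_left_mono) auto
        finally have "Wop w f x \<ge> - 1 / 2" using True etaKA unfolding C_def by (simp add: algebra_simps)
        moreover have "g x = 1" using x by (simp add: g_def)
        ultimately show "\<bar>g x + Wop w f x\<bar> \<ge> 1 / 2" by simp
      qed
    next
      case False
      show ?thesis
      proof (rule that[of x0 "x0 - eta"])
        show "x0 - (x0 - eta) = eta" by simp
        show "{x0 - eta<..<x0} \<subseteq> {0..1}" using x0 eta0 unfolding eta_def by auto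
        fix x assume x: "x \<in> {x0 - eta<..<x0}"
        then show "\<bar>x - x0\<bar> \<le> eta" by auto
        have x1: "x \<in> {0..1}" using x x0 eta0 unfolding eta_def by auto
        have "\<bar>Wop w f x - Wop w f x0\<bar> \<le> K * \<bar>x - x0\<bar> * A"
          unfolding A_def by (rule Wop_lip[OF gr lip K x1 x01 fi])
        also have "\<dots> \<le> K * eta * A" using x K A0 by (intro mult_right_mono mult_left_mono) auto
        finally have "Wop w f x \<le> 1 / 2" using False etaKA unfolding C_def by (simp add: algebra_simps)
        moreover have "g x = -1" using x by (simp add: g_def)
        ultimately show "\<bar>g x + Wop w f x\<bar> \<ge> 1 / 2" by simp
      qed
    qed
    define c where "c = 1 / (4 * K\<^sup>2 * eta\<^sup>2)"
    have lower: "AE x in I01. c * indicator {a<..<b} x \<le> (f x)\<^sup>2"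
    proof (rule AE_mp[OF eq2], rule AE_I2, intro impI)
      fix x assume x: "x \<in> space I01" and e: "(deg w x - deg w x0) * f x = g x + Wop w f x"
      show "c * indicator {a<..<b} x \<le> (f x)\<^sup>2"
      proof (cases "x \<in> {a<..<b}")
        case False then show ?thesis by simp
      next
        case True
        have x1: "x \<in> {0..1}" using x by simp
        have "\<bar>deg w x - deg w x0\<bar> \<le> K * \<bar>x - x0\<bar>" by (rule deg_lip[OF gr lip K x1 x01])
        also have "\<dots> \<le> K * eta" using near[OF True] K by simp
        finally have dl: "\<bar>deg w x - deg w x0\<bar> \<le> K * eta" .
        have "1 / 2 \<le> \<bar>(deg w x - deg w x0) * f x\<bar>" using big[OF True] e by simp
        also have "\<dots> = \<bar>deg w x - deg w x0\<bar> * \<bar>f x\<bar>" by (simp add: abs_mult)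
        also have "\<dots> \<le> K * eta * \<bar>f x\<bar>" using dl by (intro mult_right_mono) auto
        finally have h: "1 / 2 \<le> K * eta * \<bar>f x\<bar>" .
        have Ke: "K * eta > 0" using K eta0 by simp
        have "(1 / 2)\<^sup>2 \<le> (K * eta * \<bar>f x\<bar>)\<^sup>2" using h by (intro power_mono) auto
        then have "1 / 4 \<le> (K * eta)\<^sup>2 * (f x)\<^sup>2" by (simp add: power_mult_distrib power2_abs power_divide)
        moreover have P: "(K * eta)\<^sup>2 > 0" using K eta0 by simp
        moreover have "c = (1 / 4) / (K * eta)\<^sup>2" unfolding c_def by (simp add: power_mult_distrib)
        ultimately have "c \<le> (f x)\<^sup>2" by (simp add: divide_le_eq mult.commute)
        then show ?thesis using True by simp
      qed
    qed
    have Jsets: "{a<..<b} \<in> sets I01" using ab(2)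
      by (simp add: sets_restrict_space_iff)
    have "measure I01 {a<..<b} = measure lebesgue {a<..<b}"
      using ab(2) by (intro measure_restrict_space) auto
    also have "\<dots> = measure lborel {a<..<b}" by (rule measure_completion) simp
    also have "\<dots> = b - a" using ab(1) eta0 by (intro measure_lborel_Ioo) simp
    also have "\<dots> = eta" using ab(1) by simp
    finally have Jmeas: "measure I01 {a<..<b} = eta" .
    have "c * eta \<le> Q"
    proof -
      have "c * eta = (LINT x|I01. c * indicator {a<..<b} x)"
        using Jmeas ab(2) by (simp add: Int_absorb2)
      also have "\<dots> \<le> Q" unfolding Q_def
      proof (rule integral_mono_AE[OF _ _ lower])
        show "integrable I01 (\<lambda>x. c * indicator {a<..<b} x)"
          using Jsets I01_fin by (intro integrable_mult_right integrable_real_indicator) (auto simp: finite_measure.emeasure_finite less_top[symmetric])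
        show "integrable I01 (\<lambda>x. (f x)\<^sup>2)" using Lf unfolding L2_def by blast
      qed
      finally show ?thesis .
    qed
    moreover have "c * eta \<ge> Q + 1"
    proof -
      have e2: "eta \<le> 1 / (4 * K\<^sup>2 * (Q + 1))" unfolding eta_def by simp
      have "c * eta = 1 / (4 * K\<^sup>2 * eta)" unfolding c_def using eta0 by (simp add: power2_eq_square)
      also have "\<dots> \<ge> Q + 1"
        using e2 eta0 K Q0 by (simp add: divide_simps mult.commute mult.left_commute split: if_splits)
      finally show ?thesis .
    qed
    ultimately show False by simp
  qed
  show ?thesis
    unfolding spec_def using Lg nosol by blast
qed

theorem mainTheorem6:
  fixes w :: "real \<Rightarrow> real \<Rightarrow> real" and lam2 :: real
  assumes "graphon w" and "robinsonian w"
    and "assm_A1 w" and "assm_A2 w" and "assm_A3 w" and "assm_A4 w"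
    and "fiedler_value w lam2"
  shows "lam2 \<notin> deg w ` {0..1}"
proof
  assume "lam2 \<in> deg w ` {0..1}"
  then obtain x1 where x1: "x1 \<in> {0..1}" "lam2 = deg w x1" by blast
  obtain K where K: "K > 0" and lip: "lipw w K"
    using assms(3) unfolding assm_A1_def lipw_def by blast
  obtain e where e: "e > 0" and iso: "\<And>\<mu>. \<mu> \<in> spec w \<Longrightarrow> \<bar>\<mu> - lam2\<bar> < e \<Longrightarrow> \<mu> = lam2"
    using assms(7) unfolding fiedler_value_def disc_eigenvalues_def by blast
  define eta where "eta = e / (2 * K)"
  have eta: "eta > 0" unfolding eta_def using e K by simp
  define a where "a = max 0 (x1 - eta)"
  define b where "b = min 1 (x1 + eta)"
  have ab: "a < b" unfolding a_def b_def using x1 eta by auto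
  have sub: "{a<..<b} \<subseteq> {0<..<1}" unfolding a_def b_def by auto
  have "\<exists>x0\<in>{a<..<b}. deg w x0 \<noteq> deg w x1"
  proof (rule ccontr)
    assume "\<not> ?thesis"
    then have const: "\<And>x. x \<in> {a<..<b} \<Longrightarrow> deg w x = deg w x1" by blast
    have "{a<..<b} \<subseteq> {x\<in>{0..1}. (deg w has_real_derivative 0) (at x within {0..1})}"
    proof
      fix x assume x: "x \<in> {a<..<b}"
      have "((\<lambda>_. deg w x1) has_real_derivative 0) (at x)" by (rule DERIV_const)
      then have "(deg w has_real_derivative 0) (at x)"
        by (rule has_field_derivative_transform_within_open[where S="{a<..<b}"]) (use x const in auto)
      then show "x \<in> {x\<in>{0..1}. (deg w has_real_derivative 0) (at x within {0..1})}"
        using x sub by (auto intro: has_field_derivative_at_within)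
    qed
    moreover have "countable {x\<in>{0..1}. (deg w has_real_derivative 0) (at x within {0..1})}"
      using assms(5) unfolding assm_A3_def by blast
    ultimately have "countable {a<..<b}" by (rule countable_subset)
    then show False using ab uncountable_open_interval by blast
  qed
  then obtain x0 where x0: "x0 \<in> {a<..<b}" "deg w x0 \<noteq> deg w x1" by blast
  have x0i: "x0 \<in> {0<..<1}" using x0 sub by blast
  have "deg w x0 \<in> spec w" by (rule spec_mem[OF assms(1) lip K x0i])
  moreover have "\<bar>deg w x0 - lam2\<bar> < e"
  proof -
    have "\<bar>deg w x0 - deg w x1\<bar> \<le> K * \<bar>x0 - x1\<bar>"
      using x0i x1 by (intro deg_lip[OF assms(1) lip K]) auto
    also have "\<dots> \<le> K * eta" using x0 K unfolding a_def b_def by (intro mult_left_mono) auto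
    also have "\<dots> < e" unfolding eta_def using K e by simp
    finally show ?thesis using x1 by simp
  qed
  ultimately have "deg w x0 = lam2" by (rule iso)
  then show False using x0 x1 by simp
qed

end
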